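(* Let $p\in[1,\infty)$, $w$ a weight sequence, and let $A\subset L_{p,w}$ be such that for every $\varepsilon>0$ there is $n\in\mathbb{N}$ with $\|a\|_{p,w}^p-S_n(a)<\varepsilon$ for all $a\in A$; for $\varepsilon>0$ let $n(\varepsilon)$ denote the least such $n$. If there exists $m\in\mathbb{N}$ such that $n(\varepsilon)\le m$ for all $\varepsilon>0$, then $A-A=\{a-b:a,b\in A\}$ is equinormed with respect to $\{\|\cdot\|_{p,w,i}\}_{i\in\mathbb{N}}$.
   Context: A weight sequence is a sequence $w=(w_i)$ of positive reals with $w_1=1\ge w_2\ge\dots$, $w_i\to0$, and $\sum_i w_i=+\infty$. For a real sequence $a$, $\|a\|_{p,w}=\sup_{\sigma}\big(\sum_{i=1}^\infty |a_{\sigma_i}|^p w_i\big)^{1/p}$ over all permutations $\sigma$ of $\mathbb{N}$, and $L_{p,w}$ is the set of real sequences with finite $\|\cdot\|_{p,w}$. For $i\in\mathbb{N}$, $\|a\|_{p,w,i}=\|(a_1,\dots,a_i,0,0,\dots)\|_{p,w}$ and $S_i(a)=\|a\|_{p,w,i}^p$. A set $B\subset L_{p,w}$ is equinormed if $\forall\varepsilon>0\ \exists i\ \forall x\in B:\ \|x\|_{p,w}\le\|x\|_{p,w,i}+\varepsilon$. *)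

theory Defs
  imports "HOL-Analysis.Analysis"
begin

text \<open>Sequences are functions nat => real, indexed from 0 (entry k corresponds to the
paper's entry k+1).\<close>

definition weight_seq :: "(nat \<Rightarrow> real) \<Rightarrow> bool" where
  "weight_seq w \<longleftrightarrow> w 0 = 1 \<and> (\<forall>i. w i > 0) \<and> decseq w \<and> w \<longlonglongrightarrow> 0
     \<and> \<not> summable w"

definition lw_pow :: "real \<Rightarrow> (nat \<Rightarrow> real) \<Rightarrow> (nat \<Rightarrow> real) \<Rightarrow> ennreal" where
  "lw_pow p w a = (SUP \<sigma>\<in>{\<sigma>::nat\<Rightarrow>nat. bij \<sigma>}. (\<Sum>i. ennreal (\<bar>a (\<sigma> i)\<bar> powr p * w i)))"

definition Lpw :: "real \<Rightarrow> (nat \<Rightarrow> real) \<Rightarrow> (nat \<Rightarrow> real) set" where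
  "Lpw p w = {a. lw_pow p w a < \<infinity>}"

definition lw_norm :: "real \<Rightarrow> (nat \<Rightarrow> real) \<Rightarrow> (nat \<Rightarrow> real) \<Rightarrow> real" where
  "lw_norm p w a = enn2real (lw_pow p w a) powr (1 / p)"

definition trunc_seq :: "nat \<Rightarrow> (nat \<Rightarrow> real) \<Rightarrow> (nat \<Rightarrow> real)" where
  "trunc_seq i a = (\<lambda>k. if k < i then a k else 0)"

definition lw_norm_i :: "real \<Rightarrow> (nat \<Rightarrow> real) \<Rightarrow> nat \<Rightarrow> (nat \<Rightarrow> real) \<Rightarrow> real" where
  "lw_norm_i p w i a = lw_norm p w (trunc_seq i a)"

definition S_i :: "real \<Rightarrow> (nat \<Rightarrow> real) \<Rightarrow> nat \<Rightarrow> (nat \<Rightarrow> real) \<Rightarrow> real" where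
  "S_i p w i a = lw_norm_i p w i a powr p"

definition equinormed :: "real \<Rightarrow> (nat \<Rightarrow> real) \<Rightarrow> (nat \<Rightarrow> real) set \<Rightarrow> bool" where
  "equinormed p w B \<longleftrightarrow>
     (\<forall>\<epsilon>>0. \<exists>i. \<forall>x\<in>B. lw_norm p w x \<le> lw_norm_i p w i x + \<epsilon>)"

end

theory Submission
  imports Defs "HOL-Combinatorics.Transposition"
begin

lemma lw_pow_mono:
  assumes "p > 0" "\<And>k. \<bar>a k\<bar> \<le> \<bar>b k\<bar>" "\<And>i. w i \<ge> 0"
  shows "lw_pow p w a \<le> lw_pow p w b"
  unfolding lw_pow_def
proof (rule SUP_mono)
  fix \<sigma> :: "nat \<Rightarrow> nat" assume "\<sigma> \<in> {\<sigma>. bij \<sigma>}"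
  then show "\<exists>\<tau>\<in>{\<sigma>. bij \<sigma>}. (\<Sum>i. ennreal (\<bar>a (\<sigma> i)\<bar> powr p * w i)) \<le> (\<Sum>i. ennreal (\<bar>b (\<tau> i)\<bar> powr p * w i))"
    using assms by (intro bexI[of _ \<sigma>] suminf_le) (auto intro!: ennreal_leI mult_right_mono powr_mono2)
qed

lemma norm_powr_eq:
  assumes "p > 0"
  shows "lw_norm p w a powr p = enn2real (lw_pow p w a)"
proof -
  have "(enn2real (lw_pow p w a) powr (1/p)) powr p = enn2real (lw_pow p w a) powr (1/p * p)"
    by (rule powr_powr)
  also have "\<dots> = enn2real (lw_pow p w a)"
    using assms by (cases "enn2real (lw_pow p w a) = 0") auto
  finally show ?thesis unfolding lw_norm_def .
qed

lemma support:
  assumes p: "p > 0" and wpos: "\<And>i. w i > 0" and wdec: "decseq w"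
    and fin: "lw_pow p w a < \<infinity>"
    and le: "lw_pow p w a \<le> lw_pow p w (trunc_seq m a)" and km: "k \<ge> m"
  shows "a k = 0"
proof (rule ccontr)
  assume ak: "a k \<noteq> 0"
  define \<delta> where "\<delta> = ennreal (\<bar>a k\<bar> powr p * w m)"
  have dpos: "\<delta> > 0" unfolding \<delta>_def using ak wpos[of m] by auto
  have key: "(\<Sum>i. ennreal (\<bar>trunc_seq m a (\<sigma> i)\<bar> powr p * w i)) + \<delta> \<le> lw_pow p w a"
    if bs: "bij \<sigma>" for \<sigma> :: "nat \<Rightarrow> nat"
  proof -
    define I where "I = \<sigma> -` {..<m}"
    have inj: "inj \<sigma>" using bs bij_is_inj by blast
    have finI: "finite I" unfolding I_def using inj by (intro finite_vimageI) auto
    have cI: "card I \<le> m"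
      using card_inj_on_le[of \<sigma> I "{..<m}"] inj unfolding I_def by (auto intro: inj_on_subset)
    have "\<not> {..m} \<subseteq> I"
    proof
      assume "{..m} \<subseteq> I"
      then have "card {..m} \<le> card I" using finI by (rule card_mono[rotated])
      then show False using cI by simp
    qed
    then obtain q where q: "q \<le> m" "q \<notin> I" by auto
    define j0 where "j0 = inv \<sigma> k"
    have sj0: "\<sigma> j0 = k" unfolding j0_def using bs by (simp add: bij_is_surj surj_f_inv_f)
    have j0I: "j0 \<notin> I" unfolding I_def using sj0 km by auto
    define \<sigma>' where "\<sigma>' = \<sigma> \<circ> Transposition.transpose q j0"
    have bs': "bij \<sigma>'" unfolding \<sigma>'_def using bs by (intro bij_comp) auto
    have s'q: "\<sigma>' q = k" unfolding \<sigma>'_def using sj0 by simp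
    have s'I: "\<sigma>' i = \<sigma> i" if "i \<in> I" for i
      unfolding \<sigma>'_def using that q j0I by (auto simp: Transposition.transpose_def)
    have "(\<Sum>i. ennreal (\<bar>trunc_seq m a (\<sigma> i)\<bar> powr p * w i))
        = (\<Sum>i\<in>I. ennreal (\<bar>trunc_seq m a (\<sigma> i)\<bar> powr p * w i))"
      by (rule suminf_finite[OF finI]) (auto simp: I_def trunc_seq_def)
    also have "\<dots> = (\<Sum>i\<in>I. ennreal (\<bar>a (\<sigma>' i)\<bar> powr p * w i))"
      by (rule sum.cong) (auto simp: I_def trunc_seq_def s'I)
    finally have e1: "(\<Sum>i. ennreal (\<bar>trunc_seq m a (\<sigma> i)\<bar> powr p * w i))
        = (\<Sum>i\<in>I. ennreal (\<bar>a (\<sigma>' i)\<bar> powr p * w i))" .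
    have "\<delta> \<le> ennreal (\<bar>a (\<sigma>' q)\<bar> powr p * w q)"
      unfolding \<delta>_def s'q using wdec q(1) by (auto intro!: ennreal_leI mult_left_mono simp: decseq_def)
    then have "(\<Sum>i. ennreal (\<bar>trunc_seq m a (\<sigma> i)\<bar> powr p * w i)) + \<delta>
        \<le> (\<Sum>i\<in>I. ennreal (\<bar>a (\<sigma>' i)\<bar> powr p * w i)) + ennreal (\<bar>a (\<sigma>' q)\<bar> powr p * w q)"
      unfolding e1 by (rule add_left_mono)
    also have "\<dots> = (\<Sum>i\<in>insert q I. ennreal (\<bar>a (\<sigma>' i)\<bar> powr p * w i))"
      using finI q(2) by (simp add: add.commute)
    also have "\<dots> \<le> (\<Sum>i. ennreal (\<bar>a (\<sigma>' i)\<bar> powr p * w i))"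
      using finI by (intro sum_le_suminf) auto
    also have "\<dots> \<le> lw_pow p w a"
      unfolding lw_pow_def using bs' by (intro SUP_upper) auto
    finally show ?thesis .
  qed
  have "lw_pow p w (trunc_seq m a) + \<delta> \<le> lw_pow p w a"
    unfolding lw_pow_def
    by (subst ennreal_SUP_add_left[symmetric]) (auto intro!: SUP_least key[unfolded lw_pow_def] simp: bij_id)
  then have "lw_pow p w (trunc_seq m a) + \<delta> \<le> lw_pow p w (trunc_seq m a)" by (rule order_trans[OF _ le])
  moreover have "lw_pow p w (trunc_seq m a) < \<infinity>"
  proof -
    have "lw_pow p w (trunc_seq m a) \<le> lw_pow p w a"
      using wpos by (intro lw_pow_mono[OF p]) (auto simp: trunc_seq_def less_imp_le)
    then show ?thesis using fin by (rule le_less_trans)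
  qed
  ultimately have "\<delta> \<le> 0"
    using ennreal_add_left_cancel_le[of "lw_pow p w (trunc_seq m a)" \<delta> 0] by (auto simp: top.not_eq_extremum)
  then show False using dpos by simp
qed

theorem mainTheorem8:
  fixes p :: real and w :: "nat \<Rightarrow> real" and A :: "(nat \<Rightarrow> real) set"
  assumes "1 \<le> p"
    and "weight_seq w"
    and "A \<subseteq> Lpw p w"
    and "\<forall>\<epsilon>>0. \<exists>n. \<forall>a\<in>A. lw_norm p w a powr p - S_i p w n a < \<epsilon>"
    and "\<exists>m. \<forall>\<epsilon>>0. (LEAST n. \<forall>a\<in>A. lw_norm p w a powr p - S_i p w n a < \<epsilon>) \<le> m"
  shows "equinormed p w {a - b | a b. a \<in> A \<and> b \<in> A}"
proof -
  have p: "p > 0" using assms(1) by simp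
  have wpos: "\<And>i. w i > 0" and wdec: "decseq w" using assms(2) by (auto simp: weight_seq_def)
  obtain m where m: "\<And>\<epsilon>. \<epsilon> > 0 \<Longrightarrow> (LEAST n. \<forall>a\<in>A. lw_norm p w a powr p - S_i p w n a < \<epsilon>) \<le> m"
    using assms(5) by blast
  have Si: "S_i p w n a = enn2real (lw_pow p w (trunc_seq n a))" for n a
    unfolding S_i_def lw_norm_i_def using norm_powr_eq[OF p] by simp
  have tmono: "lw_pow p w (trunc_seq n a) \<le> lw_pow p w (trunc_seq n' a)" if "n \<le> n'" for n n' a
    using that wpos by (intro lw_pow_mono[OF p]) (auto simp: trunc_seq_def less_imp_le)
  have tle: "lw_pow p w (trunc_seq n a) \<le> lw_pow p w a" for n a
    using wpos by (intro lw_pow_mono[OF p]) (auto simp: trunc_seq_def less_imp_le)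
  have supp: "a k = 0" if aA: "a \<in> A" and km: "k \<ge> m" for a k
  proof -
    have fin: "lw_pow p w a < \<infinity>" using aA assms(3) by (auto simp: Lpw_def)
    have finm: "lw_pow p w (trunc_seq m a) < \<infinity>" using fin tle le_less_trans by blast
    have "enn2real (lw_pow p w a) - enn2real (lw_pow p w (trunc_seq m a)) < \<epsilon>" if e: "\<epsilon> > 0" for \<epsilon>
    proof -
      let ?P = "\<lambda>n. \<forall>a\<in>A. lw_norm p w a powr p - S_i p w n a < \<epsilon>"
      have ex: "\<exists>n. ?P n" using assms(4) e by blast
      have "?P (LEAST n. ?P n)" using ex by (rule LeastI_ex)
      then have "lw_norm p w a powr p - S_i p w (LEAST n. ?P n) a < \<epsilon>" using aA by blast
      moreover have "enn2real (lw_pow p w (trunc_seq (LEAST n. ?P n) a)) \<le> enn2real (lw_pow p w (trunc_seq m a))"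
        using tmono[OF m[OF e]] finm by (intro enn2real_mono) auto
      ultimately show ?thesis unfolding Si norm_powr_eq[OF p] by linarith
    qed
    then have "enn2real (lw_pow p w a) \<le> enn2real (lw_pow p w (trunc_seq m a))"
    proof -
      assume H: "\<And>\<epsilon>. \<epsilon> > 0 \<Longrightarrow> enn2real (lw_pow p w a) - enn2real (lw_pow p w (trunc_seq m a)) < \<epsilon>"
      show ?thesis
      proof (rule ccontr)
        assume "\<not> ?thesis"
        then show False using H[of "enn2real (lw_pow p w a) - enn2real (lw_pow p w (trunc_seq m a))"] by simp
      qed
    qed
    note le2 = this
    have "lw_pow p w a \<le> lw_pow p w (trunc_seq m a)"
    proof -
      have "lw_pow p w a = ennreal (enn2real (lw_pow p w a))" using fin by simp
      also have "\<dots> \<le> ennreal (enn2real (lw_pow p w (trunc_seq m a)))" using le2 by (rule ennreal_leI)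
      also have "\<dots> = lw_pow p w (trunc_seq m a)" using finm by simp
      finally show ?thesis .
    qed
    then show ?thesis using support[OF p wpos wdec fin _ km] by blast
  qed
  show ?thesis unfolding equinormed_def
  proof (intro allI impI exI[of _ m] ballI)
    fix \<epsilon> :: real and x assume e: "\<epsilon> > 0" and x: "x \<in> {a - b |a b. a \<in> A \<and> b \<in> A}"
    then obtain a b where ab: "x = a - b" "a \<in> A" "b \<in> A" by blast
    have "trunc_seq m x = x"
      unfolding trunc_seq_def ab using supp[OF ab(2)] supp[OF ab(3)] by (auto simp: not_less)
    then show "lw_norm p w x \<le> lw_norm_i p w m x + \<epsilon>" unfolding lw_norm_i_def using e by simp
  qed
qed

end
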